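(* Let $S^\star\subseteq S$. Then $S^\star$ generates $\mathcal{J}$ (as a two-sided ideal of $\mathcal{A}$) if and only if for every upper prime $U$ and every lower prime $D$ there exist words $U'\sim U$ and $D'\sim D$ such that either $U'D'-D'U'\in S^\star$ or $D'U'-U'D'\in S^\star$.
   Context: $\mathcal{A}$ is the free associative $\mathbb{C}$-algebra on noncommuting generators $L,R$; words are finite products of these letters. A word is balanced if it contains equally many $L$'s and $R$'s. $S=\{FG-GF : F,G \text{ nonempty balanced words}\}$ and $\mathcal{J}$ is the two-sided ideal generated by $S$. For words $X,Y$, $X\sim Y$ means $X-Y\in\mathcal{J}$. A word is prime if it is nonempty, balanced, and cannot be written as a product of two nonempty balanced words. For a balanced word $W=a_1\cdots a_n$, $e_k(W)=\sum_{i=1}^k\overline{a_i}$ ($0\le k\le n$) with $\overline{R}=1$, $\overline{L}=-1$. A prime $P$ of length $n$ is an upper prime if $e_k(P)>0$ for $1\le k\le n-1$, and a lower prime if $e_k(P)<0$ for $1\le k\le n-1$. *)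

theory Defs
  imports Complex_Main "HOL-Library.Poly_Mapping"
begin

datatype letter = L | R

type_synonym word = "letter list"

text \<open>The free associative C-algebra A on L, R: finitely supported
  C-valued functions on words (formal linear combinations of words).\<close>
type_synonym alg = "word \<Rightarrow>\<^sub>0 complex"

definition wd :: "word \<Rightarrow> alg" where
  "wd w = Poly_Mapping.single w 1"

definition amult :: "alg \<Rightarrow> alg \<Rightarrow> alg" where
  "amult f g = (\<Sum>u\<in>Poly_Mapping.keys f. \<Sum>v\<in>Poly_Mapping.keys g.
                   Poly_Mapping.single (u @ v) (Poly_Mapping.lookup f u * Poly_Mapping.lookup g v))"

inductive_set ideal_gen :: "alg set \<Rightarrow> alg set" for T :: "alg set" where
  gen: "t \<in> T \<Longrightarrow> t \<in> ideal_gen T"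
| zero: "0 \<in> ideal_gen T"
| add: "a \<in> ideal_gen T \<Longrightarrow> b \<in> ideal_gen T \<Longrightarrow> a + b \<in> ideal_gen T"
| lmult: "a \<in> ideal_gen T \<Longrightarrow> amult x a \<in> ideal_gen T"
| rmult: "a \<in> ideal_gen T \<Longrightarrow> amult a x \<in> ideal_gen T"

definition balanced :: "word \<Rightarrow> bool" where
  "balanced w \<longleftrightarrow> count_list w L = count_list w R"

definition S :: "alg set" where
  "S = {wd (F @ G) - wd (G @ F) | F G.
          F \<noteq> [] \<and> G \<noteq> [] \<and> balanced F \<and> balanced G}"

definition J :: "alg set" where
  "J = ideal_gen S"

definition wsim :: "word \<Rightarrow> word \<Rightarrow> bool" (infix "\<sim>\<^sub>J" 50) where
  "X \<sim>\<^sub>J Y \<longleftrightarrow> wd X - wd Y \<in> J"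

definition is_prime_word :: "word \<Rightarrow> bool" where
  "is_prime_word P \<longleftrightarrow> P \<noteq> [] \<and> balanced P \<and>
     \<not> (\<exists>A B. A \<noteq> [] \<and> B \<noteq> [] \<and> balanced A \<and> balanced B \<and> P = A @ B)"

definition lval :: "letter \<Rightarrow> int" where
  "lval a = (case a of R \<Rightarrow> 1 | L \<Rightarrow> -1)"

definition e :: "nat \<Rightarrow> word \<Rightarrow> int" where
  "e k W = (\<Sum>i<k. lval (W ! i))"

definition upper_prime :: "word \<Rightarrow> bool" where
  "upper_prime P \<longleftrightarrow> is_prime_word P \<and>
     (\<forall>k. 1 \<le> k \<and> k \<le> length P - 1 \<longrightarrow> e k P > 0)"

definition lower_prime :: "word \<Rightarrow> bool" where
  "lower_prime P \<longleftrightarrow> is_prime_word P \<and>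
     (\<forall>k. 1 \<le> k \<and> k \<le> length P - 1 \<longrightarrow> e k P < 0)"

end

theory Submission
  imports Defs
begin

instantiation list :: (type) monoid_add
begin
definition zero_list :: "'a list" where "zero_list = []"
definition plus_list :: "'a list \<Rightarrow> 'a list \<Rightarrow> 'a list" where "plus_list xs ys = xs @ ys"
instance by standard (simp_all add: zero_list_def plus_list_def)
end

lemma pm_expand: "(f::alg) = (\<Sum>u\<in>Poly_Mapping.keys f. Poly_Mapping.single u (Poly_Mapping.lookup f u))"
proof (rule poly_mapping_eqI)
  fix w
  show "Poly_Mapping.lookup f w = Poly_Mapping.lookup (\<Sum>u\<in>Poly_Mapping.keys f. Poly_Mapping.single u (Poly_Mapping.lookup f u)) w"
    by (cases "w \<in> Poly_Mapping.keys f")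
       (auto simp: lookup_sum lookup_single when_def in_keys_iff)
qed

lemma amult_times: "amult f g = f * g"
proof -
  have "f * g = (\<Sum>u\<in>Poly_Mapping.keys f. Poly_Mapping.single u (Poly_Mapping.lookup f u)) *
     (\<Sum>v\<in>Poly_Mapping.keys g. Poly_Mapping.single v (Poly_Mapping.lookup g v))"
    using pm_expand[of f] pm_expand[of g] by simp
  also have "\<dots> = amult f g"
    unfolding amult_def sum_distrib_left sum_distrib_right
    by (simp add: mult_single plus_list_def) (rule sum.swap)
  finally show ?thesis by simp
qed

lemma wd_append: "wd (x @ y) = wd x * wd y"
  by (simp add: wd_def mult_single plus_list_def)

lemma wd_nil: "wd [] = 1"
  by (metis single_one wd_def zero_list_def)

definition phi :: "word set \<Rightarrow> alg \<Rightarrow> complex" where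
  "phi C f = (\<Sum>w\<in>Poly_Mapping.keys f. if w \<in> C then Poly_Mapping.lookup f w else 0)"

lemma phi_super: assumes "finite A" "Poly_Mapping.keys f \<subseteq> A"
  shows "phi C f = (\<Sum>w\<in>A. if w \<in> C then Poly_Mapping.lookup f w else 0)"
  unfolding phi_def
  by (rule sum.mono_neutral_left[OF assms(1,2)]) (auto simp: in_keys_iff)

lemma phi_add: "phi C (f + g) = phi C f + phi C g"
proof -
  let ?A = "Poly_Mapping.keys f \<union> Poly_Mapping.keys g"
  have "phi C (f + g) = (\<Sum>w\<in>?A. if w \<in> C then Poly_Mapping.lookup (f+g) w else 0)"
    by (rule phi_super) (use keys_add[of f g] in auto)
  also have "\<dots> = (\<Sum>w\<in>?A. (if w \<in> C then Poly_Mapping.lookup f w else 0) + (if w \<in> C then Poly_Mapping.lookup g w else 0))"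
    by (rule sum.cong) (auto simp: lookup_add)
  also have "\<dots> = phi C f + phi C g"
    by (simp add: sum.distrib phi_super[symmetric])
  finally show ?thesis .
qed

lemma phi_zero[simp]: "phi C 0 = 0" by (simp add: phi_def)

lemma phi_uminus: "phi C (- f) = - phi C f"
proof -
  have "phi C f + phi C (-f) = 0" using phi_add[of C f "-f"] by simp
  then show ?thesis by (simp add: eq_neg_iff_add_eq_0 add.commute)
qed

lemma phi_diff: "phi C (f - g) = phi C f - phi C g"
  using phi_add[of C f "-g"] phi_uminus[of C g] by simp

lemma phi_sum: "phi C (\<Sum>a\<in>A. h a) = (\<Sum>a\<in>A. phi C (h a))"
  by (induction A rule: infinite_finite_induct) (auto simp: phi_add)

lemma phi_single: "phi C (Poly_Mapping.single w c) = (if w \<in> C then c else 0)"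
  by (simp add: phi_def)

lemma phi_wd: "phi C (wd w) = (if w \<in> C then 1 else 0)"
  by (simp add: wd_def phi_single)

lemma phi_gen:
  assumes cl: "\<And>a b. a @ F @ G @ b \<in> C \<longleftrightarrow> a @ G @ F @ b \<in> C"
  shows "phi C (x * (wd (F @ G) - wd (G @ F)) * y) = 0"
proof -
  let ?t = "wd (F @ G) - wd (G @ F)"
  have "x * ?t * y =
    (\<Sum>u\<in>Poly_Mapping.keys x. Poly_Mapping.single u (Poly_Mapping.lookup x u)) * ?t *
     (\<Sum>v\<in>Poly_Mapping.keys y. Poly_Mapping.single v (Poly_Mapping.lookup y v))"
    using pm_expand[of x] pm_expand[of y] by simp
  also have "\<dots> = (\<Sum>u\<in>Poly_Mapping.keys x. \<Sum>v\<in>Poly_Mapping.keys y.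
      Poly_Mapping.single u (Poly_Mapping.lookup x u) * ?t * Poly_Mapping.single v (Poly_Mapping.lookup y v))"
    unfolding sum_distrib_right unfolding sum_distrib_left ..
  finally have eq: "x * ?t * y = \<dots>" .
  have trm: "phi C (Poly_Mapping.single u c * ?t * Poly_Mapping.single v d) = 0" for u v c d
  proof -
    have "Poly_Mapping.single u c * ?t * Poly_Mapping.single v d =
       Poly_Mapping.single (u @ F @ G @ v) (c * d) - Poly_Mapping.single (u @ G @ F @ v) (c * d)"
      by (simp add: wd_def mult_single plus_list_def algebra_simps)
    then show ?thesis using cl[of u v] by (simp add: phi_diff phi_single)
  qed
  show ?thesis unfolding eq phi_sum trm by simp
qed

lemma phi_ideal:
  assumes T: "\<And>t. t \<in> T \<Longrightarrow> \<exists>F G. t = wd (F @ G) - wd (G @ F) \<and>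
                 (\<forall>a b. a @ F @ G @ b \<in> C \<longleftrightarrow> a @ G @ F @ b \<in> C)"
  and f: "f \<in> ideal_gen T"
  shows "phi C (x * f * y) = 0"
  using f
proof (induction arbitrary: x y)
  case (gen t)
  then obtain F G where "t = wd (F @ G) - wd (G @ F)" "\<forall>a b. a @ F @ G @ b \<in> C \<longleftrightarrow> a @ G @ F @ b \<in> C"
    using T by blast
  then show ?case using phi_gen by blast
next
  case zero
  then show ?case by simp
next
  case (add a b)
  then show ?case by (simp add: algebra_simps phi_add)
next
  case (lmult a z)
  then show ?case using lmult.IH[of "x * z" y] by (simp add: amult_times mult.assoc)
next
  case (rmult a z)
  then show ?case using rmult.IH[of x "z * y"] by (simp add: amult_times mult.assoc)
qed

lemma ideal_mult: "a \<in> ideal_gen T \<Longrightarrow> x * a * y \<in> ideal_gen T"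
  by (metis amult_times ideal_gen.lmult ideal_gen.rmult)

lemma ideal_neg: "a \<in> ideal_gen T \<Longrightarrow> - a \<in> ideal_gen T"
  using ideal_mult[of a T "-1" 1] by simp

lemma ideal_diff: "a \<in> ideal_gen T \<Longrightarrow> b \<in> ideal_gen T \<Longrightarrow> a - b \<in> ideal_gen T"
proof -
  assume "a \<in> ideal_gen T" "b \<in> ideal_gen T"
  then have "a + (- b) \<in> ideal_gen T" using ideal_gen.add ideal_neg by blast
  then show ?thesis by simp
qed

lemma ideal_mono: assumes "T \<subseteq> T'" "a \<in> ideal_gen T" shows "a \<in> ideal_gen T'"
  using assms(2) by induction (use assms(1) in \<open>auto intro: ideal_gen.intros\<close>)

definition iequiv :: "alg set \<Rightarrow> word \<Rightarrow> word \<Rightarrow> bool" where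
  "iequiv T X Y \<longleftrightarrow> wd X - wd Y \<in> ideal_gen T"

lemma ieq_refl: "iequiv T X X"
  by (simp add: iequiv_def ideal_gen.zero)

lemma ieq_sym: "iequiv T X Y \<Longrightarrow> iequiv T Y X"
  unfolding iequiv_def using ideal_neg by fastforce

lemma ieq_trans: "iequiv T X Y \<Longrightarrow> iequiv T Y Z \<Longrightarrow> iequiv T X Z"
  unfolding iequiv_def using ideal_gen.add by fastforce

lemma ieq_cong: "iequiv T X Y \<Longrightarrow> iequiv T (a @ X @ b) (a @ Y @ b)"
  unfolding iequiv_def using ideal_mult[of "wd X - wd Y" T "wd a" "wd b"]
  by (simp add: wd_append algebra_simps)

lemma wsim_iequiv: "(X \<sim>\<^sub>J Y) = iequiv S X Y"
  by (simp add: wsim_def iequiv_def J_def)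

lemma phi_class:
  assumes T: "\<And>t. t \<in> T \<Longrightarrow> \<exists>F G. t = wd (F @ G) - wd (G @ F) \<and>
                 (\<forall>a b. a @ F @ G @ b \<in> C \<longleftrightarrow> a @ G @ F @ b \<in> C)"
  and "iequiv T X Y"
  shows "X \<in> C \<longleftrightarrow> Y \<in> C"
proof -
  have "phi C (1 * (wd X - wd Y) * 1) = 0"
    using phi_ideal[OF T] assms(2) unfolding iequiv_def by blast
  then show ?thesis by (simp add: phi_diff phi_wd split: if_splits)
qed

definition hgt :: "nat \<Rightarrow> word \<Rightarrow> int" where
  "hgt k w = sum_list (map lval (take k w))"

lemma hgt_append[simp]: "hgt k (x @ y) = hgt k x + hgt (k - length x) y"
  by (simp add: hgt_def)

lemma hgt_full: "length x \<le> k \<Longrightarrow> hgt k x = hgt (length x) x"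
  by (simp add: hgt_def)

lemma hgt_0[simp]: "hgt 0 x = 0"
  by (simp add: hgt_def)

lemma hgt_Nil[simp]: "hgt k [] = 0"
  by (simp add: hgt_def)

lemma hgt_Cons: "hgt (Suc k) (a # x) = lval a + hgt k x"
  by (simp add: hgt_def)

lemma sum_lval: "sum_list (map lval x) = int (count_list x R) - int (count_list x L)"
  by (induction x) (auto simp: lval_def split: letter.splits)

lemma balanced_hgt: "balanced x \<longleftrightarrow> hgt (length x) x = 0"
  by (auto simp: hgt_def sum_lval balanced_def)

lemma balanced_hgt0: "balanced x \<Longrightarrow> length x \<le> k \<Longrightarrow> hgt k x = 0"
  using balanced_hgt hgt_full by metis

lemma e_hgt: "k \<le> length w \<Longrightarrow> e k w = hgt k w"
proof (induction k)
  case 0 then show ?case by (simp add: e_def)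
next
  case (Suc k)
  then have "take (Suc k) w = take k w @ [w ! k]" by (simp add: take_Suc_conv_app_nth)
  with Suc show ?case by (simp add: e_def hgt_def)
qed

lemma hgt_step: "k < length w \<Longrightarrow> hgt (Suc k) w = hgt k w + lval (w ! k)"
  by (simp add: hgt_def take_Suc_conv_app_nth)

lemma lval_cases: "lval a = 1 \<or> lval a = -1"
  by (cases a) (auto simp: lval_def)

lemma prime_iff: "is_prime_word P \<longleftrightarrow> P \<noteq> [] \<and> balanced P \<and> (\<forall>k. 0 < k \<and> k < length P \<longrightarrow> hgt k P \<noteq> 0)"
proof
  assume p: "is_prime_word P"
  then have "P \<noteq> [] \<and> balanced P" by (simp add: is_prime_word_def)
  moreover have "hgt k P \<noteq> 0" if "0 < k" "k < length P" for k
  proof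
    assume h: "hgt k P = 0"
    have "balanced (take k P)" using h that by (simp add: balanced_hgt min_def hgt_def)
    moreover have "balanced (drop k P)"
    proof -
      have "hgt (length P) P = 0" using \<open>P \<noteq> [] \<and> balanced P\<close> balanced_hgt by auto
      then have "hgt (length P) (take k P @ drop k P) = 0" by simp
      then show ?thesis using h that unfolding hgt_append balanced_hgt
        by (simp add: min_def hgt_def)
    qed
    moreover have "take k P \<noteq> []" "drop k P \<noteq> []" using that by auto
    ultimately show False using p unfolding is_prime_word_def
      by (metis append_take_drop_id)
  qed
  ultimately show "P \<noteq> [] \<and> balanced P \<and> (\<forall>k. 0 < k \<and> k < length P \<longrightarrow> hgt k P \<noteq> 0)" by blast
next
  assume a: "P \<noteq> [] \<and> balanced P \<and> (\<forall>k. 0 < k \<and> k < length P \<longrightarrow> hgt k P \<noteq> 0)"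
  show "is_prime_word P" unfolding is_prime_word_def
  proof (intro conjI)
    show "P \<noteq> []" "balanced P" using a by auto
  next
    show "\<not> (\<exists>A B. A \<noteq> [] \<and> B \<noteq> [] \<and> balanced A \<and> balanced B \<and> P = A @ B)"
    proof
    assume "\<exists>A B. A \<noteq> [] \<and> B \<noteq> [] \<and> balanced A \<and> balanced B \<and> P = A @ B"
    then obtain A B where ab: "A \<noteq> []" "B \<noteq> []" "balanced A" "P = A @ B" by blast
    then have "hgt (length A) P = 0" by (simp add: balanced_hgt)
    moreover have "0 < length A" "length A < length P" using ab by auto
    ultimately show False using a by blast
  qed
  qed
qed

lemma upper_iff: "upper_prime P \<longleftrightarrow> P \<noteq> [] \<and> balanced P \<and> (\<forall>k. 0 < k \<and> k < length P \<longrightarrow> hgt k P > 0)"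
proof
  assume u: "upper_prime P"
  then have "P \<noteq> [] \<and> balanced P" by (simp add: upper_prime_def is_prime_word_def)
  moreover have "hgt k P > 0" if "0 < k" "k < length P" for k
  proof -
    have "\<forall>k. 1 \<le> k \<and> k \<le> length P - 1 \<longrightarrow> e k P > 0" using u unfolding upper_prime_def by blast
    moreover have "1 \<le> k \<and> k \<le> length P - 1" using that by auto
    ultimately have "e k P > 0" by blast
    then show ?thesis using e_hgt[of k P] that by simp
  qed
  ultimately show "P \<noteq> [] \<and> balanced P \<and> (\<forall>k. 0 < k \<and> k < length P \<longrightarrow> hgt k P > 0)" by blast
next
  assume a: "P \<noteq> [] \<and> balanced P \<and> (\<forall>k. 0 < k \<and> k < length P \<longrightarrow> hgt k P > 0)"
  then have "is_prime_word P" unfolding prime_iff by force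
  moreover have "e k P > 0" if "1 \<le> k" "k \<le> length P - 1" for k
    using a that e_hgt[of k P] by auto
  ultimately show "upper_prime P" unfolding upper_prime_def by blast
qed

lemma lower_iff: "lower_prime P \<longleftrightarrow> P \<noteq> [] \<and> balanced P \<and> (\<forall>k. 0 < k \<and> k < length P \<longrightarrow> hgt k P < 0)"
proof
  assume u: "lower_prime P"
  then have "P \<noteq> [] \<and> balanced P" by (simp add: lower_prime_def is_prime_word_def)
  moreover have "hgt k P < 0" if "0 < k" "k < length P" for k
  proof -
    have "\<forall>k. 1 \<le> k \<and> k \<le> length P - 1 \<longrightarrow> e k P < 0" using u unfolding lower_prime_def by blast
    moreover have "1 \<le> k \<and> k \<le> length P - 1" using that by auto
    ultimately have "e k P < 0" by blast
    then show ?thesis using e_hgt[of k P] that by simp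
  qed
  ultimately show "P \<noteq> [] \<and> balanced P \<and> (\<forall>k. 0 < k \<and> k < length P \<longrightarrow> hgt k P < 0)" by blast
next
  assume a: "P \<noteq> [] \<and> balanced P \<and> (\<forall>k. 0 < k \<and> k < length P \<longrightarrow> hgt k P < 0)"
  then have "is_prime_word P" unfolding prime_iff by force
  moreover have "e k P < 0" if "1 \<le> k" "k \<le> length P - 1" for k
    using a that e_hgt[of k P] by auto
  ultimately show "lower_prime P" unfolding lower_prime_def by blast
qed

lemma prime_cases:
  assumes p: "is_prime_word P"
  shows "upper_prime P \<or> lower_prime P"
proof -
  from p have ne: "P \<noteq> []" and bal: "balanced P" and nz: "\<forall>k. 0 < k \<and> k < length P \<longrightarrow> hgt k P \<noteq> 0"
    unfolding prime_iff by auto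
  have h1: "hgt 1 P = lval (P ! 0)" using ne hgt_step[of 0 P] by simp
  have stepb: "\<bar>hgt (Suc k) P - hgt k P\<bar> = 1" if "k < length P" for k
    using hgt_step[OF that] lval_cases[of "P ! k"] by auto
  show ?thesis
  proof (cases "lval (P ! 0) = 1")
    case True
    have "0 < k \<longrightarrow> k < length P \<longrightarrow> hgt k P > 0" for k
    proof (induction k)
      case (Suc k)
      show ?case
      proof (intro impI)
        assume "Suc k < length P"
        show "hgt (Suc k) P > 0"
        proof (cases "k = 0")
          case True then show ?thesis using h1 \<open>lval (P ! 0) = 1\<close> by simp
        next
          case False
          then have "hgt k P > 0" using Suc \<open>Suc k < length P\<close> by simp
          moreover have "hgt (Suc k) P \<noteq> 0" using nz \<open>Suc k < length P\<close> by blast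
          ultimately show ?thesis using stepb[of k] \<open>Suc k < length P\<close> by auto
        qed
      qed
    qed simp
    then show ?thesis using ne bal unfolding upper_iff by blast
  next
    case False
    then have "lval (P ! 0) = -1" using lval_cases by blast
    have "0 < k \<longrightarrow> k < length P \<longrightarrow> hgt k P < 0" for k
    proof (induction k)
      case (Suc k)
      show ?case
      proof (intro impI)
        assume "Suc k < length P"
        show "hgt (Suc k) P < 0"
        proof (cases "k = 0")
          case True then show ?thesis using h1 \<open>lval (P ! 0) = -1\<close> by simp
        next
          case False
          then have "hgt k P < 0" using Suc \<open>Suc k < length P\<close> by simp
          moreover have "hgt (Suc k) P \<noteq> 0" using nz \<open>Suc k < length P\<close> by blast
          ultimately show ?thesis using stepb[of k] \<open>Suc k < length P\<close> by auto
        qed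
      qed
    qed simp
    then show ?thesis using ne bal unfolding lower_iff by blast
  qed
qed

lemma shape0:
  assumes "P \<noteq> []" "balanced P"
  shows "\<exists>a X b. P = a # X @ [b] \<and> hgt 1 P = lval a \<and> hgt (Suc (length X)) P = lval a + hgt (length X) X
     \<and> lval a + hgt (length X) X + lval b = 0"
proof -
  obtain a P' where P: "P = a # P'" using assms(1) by (cases P) auto
  have "P' \<noteq> []" using assms(2) P by (cases a) (auto simp: balanced_def)
  then obtain X b where P': "P' = X @ [b]" by (cases P' rule: rev_exhaust) auto
  have "hgt (length P) P = 0" using assms(2) balanced_hgt by blast
  then have t: "lval a + hgt (length X) X + lval b = 0" using P P' by (simp add: hgt_def)
  have h1: "hgt 1 P = lval a" using P by (simp add: hgt_def)
  have h2: "hgt (Suc (length X)) P = lval a + hgt (length X) X" using P P' by (simp add: hgt_def)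
  show ?thesis using P P' t h1 h2 by blast
qed

lemma lval_R: "lval c = 1 \<Longrightarrow> c = R" by (cases c) (simp_all add: lval_def)
lemma lval_L: "lval c = -1 \<Longrightarrow> c = L" by (cases c) (simp_all add: lval_def)

lemma upper_shape:
  assumes "upper_prime P" shows "\<exists>X. P = R # X @ [L] \<and> balanced X"
proof -
  have a: "P \<noteq> []" "balanced P" "\<forall>k. 0 < k \<and> k < length P \<longrightarrow> hgt k P > 0"
    using assms unfolding upper_iff by auto
  obtain c X d where P: "P = c # X @ [d]" and h1: "hgt 1 P = lval c"
    and h2: "hgt (Suc (length X)) P = lval c + hgt (length X) X"
    and t: "lval c + hgt (length X) X + lval d = 0"
    using shape0[OF a(1,2)] by blast
  have "hgt 1 P > 0" "hgt (Suc (length X)) P > 0"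
    using a(3)[rule_format, of 1] a(3)[rule_format, of "Suc (length X)"] P by simp_all
  then have "lval c = 1" "lval d = -1" "hgt (length X) X = 0"
    using h1 h2 t lval_cases[of c] lval_cases[of d] by auto
  then have "c = R" "d = L" using lval_R lval_L by blast+
  then show ?thesis using P \<open>hgt (length X) X = 0\<close> balanced_hgt by blast
qed

lemma lower_shape:
  assumes "lower_prime P" shows "\<exists>X. P = L # X @ [R] \<and> balanced X"
proof -
  have a: "P \<noteq> []" "balanced P" "\<forall>k. 0 < k \<and> k < length P \<longrightarrow> hgt k P < 0"
    using assms unfolding lower_iff by auto
  obtain c X d where P: "P = c # X @ [d]" and h1: "hgt 1 P = lval c"
    and h2: "hgt (Suc (length X)) P = lval c + hgt (length X) X"
    and t: "lval c + hgt (length X) X + lval d = 0"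
    using shape0[OF a(1,2)] by blast
  have "hgt 1 P < 0" "hgt (Suc (length X)) P < 0"
    using a(3)[rule_format, of 1] a(3)[rule_format, of "Suc (length X)"] P by simp_all
  then have "lval c = -1" "lval d = 1" "hgt (length X) X = 0"
    using h1 h2 t lval_cases[of c] lval_cases[of d] by auto
  then have "c = L" "d = R" using lval_R lval_L by blast+
  then show ?thesis using P \<open>hgt (length X) X = 0\<close> balanced_hgt by blast
qed

lemma move_int:
  assumes nq: "\<not> Q 0" and bF: "balanced F" and bG: "balanced G" and nF: "F \<noteq> []" and nG: "G \<noteq> []"
    and H: "\<forall>k. 0 < k \<and> k < length (a @ F @ G @ b) \<longrightarrow> Q (hgt k (a @ F @ G @ b))"
  shows "\<forall>k. 0 < k \<and> k < length (a @ G @ F @ b) \<longrightarrow> Q (hgt k (a @ G @ F @ b))"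
proof (intro allI impI)
  fix k assume k: "0 < k \<and> k < length (a @ G @ F @ b)"
  let ?w = "a @ F @ G @ b"
  have F0: "hgt j F = 0" if "length F \<le> j" for j using bF that balanced_hgt0 by blast
  have G0: "hgt j G = 0" if "length G \<le> j" for j using bG that balanced_hgt0 by blast
  have ha: "hgt j a = hgt (length a) a" if "length a \<le> j" for j using that hgt_full by blast
  have hG: "hgt j G = hgt (length G) G" if "length G \<le> j" for j using that hgt_full by blast
  have lF: "length F > 0" "length G > 0" using nF nG by auto
  consider (c1) "k \<le> length a" | (c2) "length a < k \<and> k \<le> length a + length G"
    | (c3) "length a + length G < k \<and> k \<le> length a + length G + length F"
    | (c4) "length a + length G + length F < k" by linarith
  then show "Q (hgt k (a @ G @ F @ b))"
  proof cases
    case c1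
    then have "hgt k (a @ G @ F @ b) = hgt k ?w" by simp
    moreover have "Q (hgt k ?w)" using H[rule_format, of k] k c1 lF by simp
    ultimately show ?thesis by simp
  next
    case c2
    have v: "hgt k (a @ G @ F @ b) = hgt (length a) a + hgt (k - length a) G"
      using c2 ha[of k] F0 by simp
    show ?thesis
    proof (cases "b = [] \<and> k = length a + length G")
      case True
      show ?thesis
      proof (cases "a = []")
        case True
        then have "Q (hgt (length F) ?w)" using H lF \<open>b = [] \<and> k = length a + length G\<close> by auto
        moreover have "hgt (length F) ?w = 0" using True F0 by simp
        ultimately show ?thesis using nq by simp
      next
        case False
        then have "Q (hgt (length a) ?w)" using H lF by auto
        moreover have "hgt (length a) ?w = hgt (length a) a" by simp
        moreover have "hgt (k - length a) G = 0" using G0 \<open>b = [] \<and> k = length a + length G\<close> by simp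
        ultimately show ?thesis using v by simp
      qed
    next
      case False
      have "length b > 0 \<or> k < length a + length G" using False c2 by auto
      then have "k + length F < length ?w" using c2 by (cases b) auto
      then have q: "Q (hgt (k + length F) ?w)" using H[rule_format, of "k + length F"] c2 by simp
      have d: "length a \<le> k + length F" "length F \<le> k + length F - length a"
        "k + length F - length a - length F = k - length a"
        "k + length F - length a - length F - length G = 0" using c2 by arith+
      have "hgt (k + length F) ?w = hgt (length a) a + hgt (k - length a) G"
        using ha[OF d(1)] F0[OF d(2)] d(3,4) by (simp add: diff_diff_add)
      then show ?thesis using v q by metis
    qed
  next
    case c3
    have "length G \<le> k - length a" using c3 by arith
    then have v: "hgt k (a @ G @ F @ b) = hgt (length a) a + hgt (k - length a - length G) F"
      using c3 ha[of k] G0[of "k - length a"] by simp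
    have "0 < k - length G \<and> k - length G < length ?w" using c3 k lF by auto
    then have q: "Q (hgt (k - length G) ?w)" using H by blast
    have d: "length a \<le> k - length G" "k - length G - length a = k - length a - length G"
      "k - length G - length a - length F = 0" using c3 by arith+
    have "hgt (k - length G) ?w = hgt (length a) a + hgt (k - length a - length G) F"
      using ha[OF d(1)] d(2,3) by (simp add: diff_diff_add)
    then show ?thesis using v q by metis
  next
    case c4
    have d: "length a \<le> k" "length G \<le> k - length a" "length F \<le> k - length a - length G"
      "length F \<le> k - length a" "length G \<le> k - length a - length F"
      "k - length a - length F - length G = k - length a - length G - length F" using c4 by arith+
    have "hgt k (a @ G @ F @ b) = hgt (length a) a + hgt (k - length a - length G - length F) b"
      using ha[OF d(1)] G0[OF d(2)] F0[OF d(3)] by (simp add: diff_diff_add)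
    moreover have "hgt k ?w = hgt (length a) a + hgt (k - length a - length G - length F) b"
      using ha[OF d(1)] G0[OF d(5)] F0[OF d(4)] d(6) by (simp add: diff_diff_add)
    moreover have "Q (hgt k ?w)" using H k by auto
    ultimately show ?thesis by metis
  qed
qed

lemma S_elem: "t \<in> S \<Longrightarrow> \<exists>F G. t = wd (F @ G) - wd (G @ F) \<and> F \<noteq> [] \<and> G \<noteq> [] \<and> balanced F \<and> balanced G"
  unfolding S_def by blast

lemma balanced_swap: "balanced (a @ F @ G @ b) \<longleftrightarrow> balanced (a @ G @ F @ b)"
  by (simp add: balanced_def add_ac)

lemma upper_move:
  assumes "balanced F" "balanced G" "F \<noteq> []" "G \<noteq> []" "upper_prime (a @ F @ G @ b)"
  shows "upper_prime (a @ G @ F @ b)"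
  using assms move_int[of "\<lambda>x. x > 0" F G a b] balanced_swap[of a F G b] unfolding upper_iff by auto

lemma lower_move:
  assumes "balanced F" "balanced G" "F \<noteq> []" "G \<noteq> []" "lower_prime (a @ F @ G @ b)"
  shows "lower_prime (a @ G @ F @ b)"
  using assms move_int[of "\<lambda>x. x < 0" F G a b] balanced_swap[of a F G b] unfolding lower_iff by auto

lemma upper_class: assumes "X \<sim>\<^sub>J U" "upper_prime U" shows "upper_prime X"
proof -
  have "X \<in> {w. upper_prime w} \<longleftrightarrow> U \<in> {w. upper_prime w}"
  proof (rule phi_class[of S])
    fix t assume "t \<in> S"
    then obtain F G where t: "t = wd (F @ G) - wd (G @ F)" "F \<noteq> []" "G \<noteq> []" "balanced F" "balanced G"
      using S_elem by blast
    then show "\<exists>F G. t = wd (F @ G) - wd (G @ F) \<and> (\<forall>a b. a @ F @ G @ b \<in> {w. upper_prime w} \<longleftrightarrow> a @ G @ F @ b \<in> {w. upper_prime w})"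
      using upper_move by blast
  next
    show "iequiv S X U" using assms(1) wsim_iequiv by blast
  qed
  then show ?thesis using assms(2) by simp
qed

lemma lower_class: assumes "X \<sim>\<^sub>J U" "lower_prime U" shows "lower_prime X"
proof -
  have "X \<in> {w. lower_prime w} \<longleftrightarrow> U \<in> {w. lower_prime w}"
  proof (rule phi_class[of S])
    fix t assume "t \<in> S"
    then obtain F G where t: "t = wd (F @ G) - wd (G @ F)" "F \<noteq> []" "G \<noteq> []" "balanced F" "balanced G"
      using S_elem by blast
    then show "\<exists>F G. t = wd (F @ G) - wd (G @ F) \<and> (\<forall>a b. a @ F @ G @ b \<in> {w. lower_prime w} \<longleftrightarrow> a @ G @ F @ b \<in> {w. lower_prime w})"
      using lower_move by blast
  next
    show "iequiv S X U" using assms(1) wsim_iequiv by blast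
  qed
  then show ?thesis using assms(2) by simp
qed

lemma ieq_app: "iequiv T X X' \<Longrightarrow> iequiv T Y Y' \<Longrightarrow> iequiv T (X @ Y) (X' @ Y')"
  using ieq_cong[of T X X' "[]" Y] ieq_cong[of T Y Y' X' "[]"] ieq_trans by fastforce

lemma S_swap: "balanced F \<Longrightarrow> balanced G \<Longrightarrow> iequiv S (F @ G) (G @ F)"
proof (cases "F = [] \<or> G = []")
  case True then show ?thesis by (auto simp: ieq_refl)
next
  case False
  assume "balanced F" "balanced G"
  then have "wd (F @ G) - wd (G @ F) \<in> S" using False unfolding S_def by blast
  then show ?thesis unfolding iequiv_def by (rule ideal_gen.gen)
qed

lemma hgt_UD:
  assumes "upper_prime U1" "lower_prime D1"
  shows "\<And>k. 0 < k \<Longrightarrow> k < length U1 \<Longrightarrow> hgt k (U1 @ D1) > 0"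
    and "\<And>k. length U1 < k \<Longrightarrow> k < length (U1 @ D1) \<Longrightarrow> hgt k (U1 @ D1) < 0"
    and "hgt (length U1) (U1 @ D1) = 0" "hgt (length (U1 @ D1)) (U1 @ D1) = 0"
proof -
  have u: "U1 \<noteq> []" "balanced U1" "\<forall>k. 0 < k \<and> k < length U1 \<longrightarrow> hgt k U1 > 0" using assms(1) upper_iff by auto
  have d: "D1 \<noteq> []" "balanced D1" "\<forall>k. 0 < k \<and> k < length D1 \<longrightarrow> hgt k D1 < 0" using assms(2) lower_iff by auto
  have u0: "hgt j U1 = 0" if "length U1 \<le> j" for j using u(2) that balanced_hgt0 by blast
  show "\<And>k. 0 < k \<Longrightarrow> k < length U1 \<Longrightarrow> hgt k (U1 @ D1) > 0" using u(3) by simp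
  show "\<And>k. length U1 < k \<Longrightarrow> k < length (U1 @ D1) \<Longrightarrow> hgt k (U1 @ D1) < 0"
    using d(3) u0 by simp
  show "hgt (length U1) (U1 @ D1) = 0" using u0 by simp
  show "hgt (length (U1 @ D1)) (U1 @ D1) = 0" using u0 d(2) balanced_hgt by simp
qed

lemma straddle:
  assumes w: "a @ F @ G @ b = U1 @ D1" and up: "upper_prime U1" and lo: "lower_prime D1"
    and "F \<noteq> []" "G \<noteq> []" "balanced F" "balanced G"
  shows "length a + length F + length G \<le> length U1 \<or> length U1 \<le> length a \<or> (a = [] \<and> b = [] \<and> F = U1 \<and> G = D1)"
proof (rule ccontr)
  assume nc: "\<not> ?thesis"
  let ?w = "U1 @ D1"
  let ?u = "length U1" and ?n = "length ?w"
  let ?p = "length a" and ?q = "length a + length F" and ?r = "length a + length F + length G"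
  have F0: "hgt j F = 0" if "length F \<le> j" for j using \<open>balanced F\<close> that balanced_hgt0 by blast
  have G0: "hgt j G = 0" if "length G \<le> j" for j using \<open>balanced G\<close> that balanced_hgt0 by blast
  have ha: "hgt j a = hgt (length a) a" if "length a \<le> j" for j using that hgt_full by blast
  have ln: "?n = ?r + length b" using arg_cong[OF w, of length] by simp
  have hp: "hgt ?p ?w = hgt ?p a" unfolding w[symmetric] by simp
  have hq: "hgt ?q ?w = hgt ?p a" unfolding w[symmetric] using F0 ha[of ?q] by simp
  have hr: "hgt ?r ?w = hgt ?p a" unfolding w[symmetric] using F0 G0 ha[of ?r]
    by (simp add: diff_diff_add)
  have pu: "?p < ?u" "?u < ?r" using nc by auto
  note H = hgt_UD[OF up lo]
  have r_le: "?r \<le> ?n" using ln by simp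
  have hr_np: "hgt ?r ?w \<le> 0"
    using H(2)[of ?r] H(4) pu r_le by (cases "?r = ?n") auto
  have p0: "?p = 0"
  proof (rule ccontr)
    assume "?p \<noteq> 0"
    then have "hgt ?p ?w > 0" using H(1) pu by auto
    then show False using hp hr hr_np by simp
  qed
  then have h0: "hgt ?p a = 0" by simp
  have rn: "?r = ?n"
  proof (rule ccontr)
    assume "?r \<noteq> ?n"
    then have "hgt ?r ?w < 0" using H(2) pu r_le by auto
    then show False using hr h0 by simp
  qed
  have qu: "?q = ?u"
  proof -
    have "length F > 0" "length G > 0" using \<open>F \<noteq> []\<close> \<open>G \<noteq> []\<close> by auto
    then have "0 < ?q" "?q < ?n" using ln rn by linarith+
    moreover have "hgt ?q ?w = 0" using hq h0 by simp
    ultimately show ?thesis using H(1)[of ?q] H(2)[of ?q] by (cases "?q < ?u"; cases "?u < ?q") auto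
  qed
  have "a = []" "b = []" using p0 rn ln by auto
  moreover then have "F = U1 \<and> G = D1" using w qu by (simp add: append_eq_append_conv)
  ultimately show False using nc by blast
qed

lemma app_split:
  assumes "xs @ ys = zs @ ts" "length xs \<le> length zs"
  shows "zs = xs @ drop (length xs) zs \<and> ys = drop (length xs) zs @ ts"
proof -
  have "take (length xs) (xs @ ys) = take (length xs) (zs @ ts)" using assms(1) by simp
  then have "xs = take (length xs) zs" using assms(2) by simp
  moreover have "drop (length xs) (xs @ ys) = drop (length xs) (zs @ ts)" using assms(1) by simp
  then have "ys = drop (length xs) zs @ ts" using assms(2) by simp
  ultimately show ?thesis by (metis append_take_drop_id)
qed

lemma forward_cl:
  assumes nx: "\<not> (\<exists>U' D'. U' \<sim>\<^sub>J U \<and> D' \<sim>\<^sub>J D \<and>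
         (wd (U' @ D') - wd (D' @ U') \<in> Sstar \<or> wd (D' @ U') - wd (U' @ D') \<in> Sstar))"
    and up: "upper_prime U" and lo: "lower_prime D"
    and F: "F \<noteq> []" "G \<noteq> []" "balanced F" "balanced G"
    and st: "wd (F @ G) - wd (G @ F) \<in> Sstar \<or> wd (G @ F) - wd (F @ G) \<in> Sstar"
    and inC: "a @ F @ G @ b \<in> {U1 @ D1 | U1 D1. U1 \<sim>\<^sub>J U \<and> D1 \<sim>\<^sub>J D}"
  shows "a @ G @ F @ b \<in> {U1 @ D1 | U1 D1. U1 \<sim>\<^sub>J U \<and> D1 \<sim>\<^sub>J D}"
proof -
  obtain U1 D1 where w: "a @ F @ G @ b = U1 @ D1" and u1: "U1 \<sim>\<^sub>J U" and d1: "D1 \<sim>\<^sub>J D"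
    using inC by blast
  have up1: "upper_prime U1" using upper_class[OF u1 up] .
  have lo1: "lower_prime D1" using lower_class[OF d1 lo] .
  have sw: "iequiv S (F @ G) (G @ F)" using S_swap F by blast
  consider (i1) "length a + length F + length G \<le> length U1" | (i2) "length U1 \<le> length a"
    | (i3) "a = [] \<and> b = [] \<and> F = U1 \<and> G = D1"
    using straddle[OF w up1 lo1 F] by blast
  then show ?thesis
  proof cases
    case i1
    have w': "(a @ F @ G) @ b = U1 @ D1" using w by simp
    define b' where "b' = drop (length (a @ F @ G)) U1"
    have U1: "U1 = a @ F @ G @ b'" and b: "b = b' @ D1"
      using app_split[OF w'] i1 unfolding b'_def by auto
    have "iequiv S (a @ G @ F @ b') (a @ F @ G @ b')" using ieq_cong[OF ieq_sym[OF sw]] by simp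
    then have "iequiv S (a @ G @ F @ b') U" using u1 U1 ieq_trans wsim_iequiv by metis
    then have "(a @ G @ F @ b') \<sim>\<^sub>J U" using wsim_iequiv by blast
    moreover have "a @ G @ F @ b = (a @ G @ F @ b') @ D1" using b by simp
    ultimately show ?thesis using d1 by blast
  next
    case i2
    have w': "U1 @ D1 = a @ (F @ G @ b)" using w by simp
    define a' where "a' = drop (length U1) a"
    have a: "a = U1 @ a'" and D1: "D1 = a' @ F @ G @ b"
      using app_split[OF w'] i2 unfolding a'_def by auto
    have "iequiv S (a' @ G @ F @ b) (a' @ F @ G @ b)" using ieq_cong[OF ieq_sym[OF sw]] by simp
    then have "iequiv S (a' @ G @ F @ b) D" using d1 D1 ieq_trans wsim_iequiv by metis
    then have "(a' @ G @ F @ b) \<sim>\<^sub>J D" using wsim_iequiv by blast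
    moreover have "a @ G @ F @ b = U1 @ (a' @ G @ F @ b)" using a by simp
    ultimately show ?thesis using u1 by blast
  next
    case i3
    then show ?thesis using nx u1 d1 st by blast
  qed
qed

lemma forward:
  assumes sub: "Sstar \<subseteq> S" and eqJ: "ideal_gen Sstar = J" and up: "upper_prime U" and lo: "lower_prime D"
  shows "\<exists>U' D'. U' \<sim>\<^sub>J U \<and> D' \<sim>\<^sub>J D \<and>
         (wd (U' @ D') - wd (D' @ U') \<in> Sstar \<or> wd (D' @ U') - wd (U' @ D') \<in> Sstar)"
proof (rule ccontr)
  assume nx: "\<not> ?thesis"
  define C where "C = {U1 @ D1 | U1 D1. U1 \<sim>\<^sub>J U \<and> D1 \<sim>\<^sub>J D}"
  have "U @ D \<in> C \<longleftrightarrow> D @ U \<in> C"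
  proof (rule phi_class[of Sstar])
    fix t assume "t \<in> Sstar"
    then have tS: "t \<in> S" using sub by blast
    then obtain F G where t: "t = wd (F @ G) - wd (G @ F)" "F \<noteq> []" "G \<noteq> []" "balanced F" "balanced G"
      using S_elem by blast
    have "a @ F @ G @ b \<in> C \<longleftrightarrow> a @ G @ F @ b \<in> C" for a b
    proof
      assume "a @ F @ G @ b \<in> C"
      then show "a @ G @ F @ b \<in> C" unfolding C_def
        using forward_cl[OF nx up lo t(2,3,4,5)] \<open>t \<in> Sstar\<close> t(1) by blast
    next
      assume "a @ G @ F @ b \<in> C"
      then show "a @ F @ G @ b \<in> C" unfolding C_def
        using forward_cl[OF nx up lo t(3,2,5,4)] \<open>t \<in> Sstar\<close> t(1) by blast
    qed
    then show "\<exists>F G. t = wd (F @ G) - wd (G @ F) \<and> (\<forall>a b. a @ F @ G @ b \<in> C \<longleftrightarrow> a @ G @ F @ b \<in> C)"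
      using t(1) by blast
  next
    have "balanced U" "balanced D" using up lo upper_iff lower_iff by auto
    then have "iequiv S (U @ D) (D @ U)" by (rule S_swap)
    then show "iequiv Sstar (U @ D) (D @ U)" using eqJ unfolding iequiv_def J_def by simp
  qed
  moreover have "U @ D \<in> C" unfolding C_def using ieq_refl wsim_iequiv by blast
  ultimately have "D @ U \<in> C" by blast
  then obtain U1 D1 where w: "D @ U = U1 @ D1" and u1: "U1 \<sim>\<^sub>J U" unfolding C_def by blast
  have "upper_prime U1" using upper_class[OF u1 up] .
  then obtain X where "U1 = R # X @ [L]" using upper_shape by blast
  moreover obtain Y where "D = L # Y @ [R]" using lower_shape[OF lo] by blast
  ultimately show False using w by simp
qed

lemma backward_main:
  assumes sub: "Sstar \<subseteq> S"
    and H: "\<forall>U D. upper_prime U \<longrightarrow> lower_prime D \<longrightarrow>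
      (\<exists>U' D'. U' \<sim>\<^sub>J U \<and> D' \<sim>\<^sub>J D \<and>
         (wd (U' @ D') - wd (D' @ U') \<in> Sstar \<or> wd (D' @ U') - wd (U' @ D') \<in> Sstar))"
  shows "\<forall>F G. balanced F \<longrightarrow> balanced G \<longrightarrow> length F + length G = m \<longrightarrow> iequiv Sstar (F @ G) (G @ F)"
proof (induction m rule: less_induct)
  case (less m)
  have sw: "iequiv Sstar (F @ G) (G @ F)" if "balanced F" "balanced G" "length F + length G < m" for F G
    using less that by blast
  have cls: "iequiv Sstar X Y" if "X \<sim>\<^sub>J Y" "length X < m" for X Y
  proof -
    define C where "C = {w. length w = length X \<and> iequiv Sstar X w}"
    have "X \<in> C \<longleftrightarrow> Y \<in> C"
    proof (rule phi_class[of S])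
      fix t assume "t \<in> S"
      then obtain F G where t: "t = wd (F @ G) - wd (G @ F)" "F \<noteq> []" "G \<noteq> []" "balanced F" "balanced G"
        using S_elem by blast
      have "a @ F @ G @ b \<in> C \<longleftrightarrow> a @ G @ F @ b \<in> C" for a b
      proof -
        have q: "length (a @ F @ G @ b) = length X \<Longrightarrow> iequiv Sstar (a @ F @ G @ b) (a @ G @ F @ b)"
          using ieq_cong[OF sw[OF t(4,5)]] that(2) by simp
        have l: "length (a @ F @ G @ b) = length (a @ G @ F @ b)" by simp
        show ?thesis unfolding C_def mem_Collect_eq
        proof
          assume A: "length (a @ F @ G @ b) = length X \<and> iequiv Sstar X (a @ F @ G @ b)"
          then show "length (a @ G @ F @ b) = length X \<and> iequiv Sstar X (a @ G @ F @ b)"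
            using q l ieq_trans by metis
        next
          assume A: "length (a @ G @ F @ b) = length X \<and> iequiv Sstar X (a @ G @ F @ b)"
          then show "length (a @ F @ G @ b) = length X \<and> iequiv Sstar X (a @ F @ G @ b)"
            using q l ieq_trans ieq_sym by metis
        qed
      qed
      then show "\<exists>F G. t = wd (F @ G) - wd (G @ F) \<and> (\<forall>a b. a @ F @ G @ b \<in> C \<longleftrightarrow> a @ G @ F @ b \<in> C)"
        using t(1) by blast
    next
      show "iequiv S X Y" using that(1) wsim_iequiv by blast
    qed
    moreover have "X \<in> C" unfolding C_def by (simp add: ieq_refl)
    ultimately show ?thesis unfolding C_def by blast
  qed
  have gen2: "iequiv Sstar (U' @ D') (D' @ U')"
    if "wd (U' @ D') - wd (D' @ U') \<in> Sstar \<or> wd (D' @ U') - wd (U' @ D') \<in> Sstar" for U' D'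
    using that ideal_gen.gen ieq_sym unfolding iequiv_def by metis
  have mixed: "iequiv Sstar (U @ D) (D @ U)" if mx: "upper_prime U" "lower_prime D" "length U + length D = m" for U D
  proof -
    obtain U' D' where u': "U' \<sim>\<^sub>J U" and d': "D' \<sim>\<^sub>J D" and g: "iequiv Sstar (U' @ D') (D' @ U')"
      using H mx(1,2) gen2 by blast
    have "U \<noteq> []" "D \<noteq> []" using mx upper_iff lower_iff by auto
    then have lU: "length U < m" "length D < m" using mx(3) by auto
    have uu: "iequiv Sstar U U'" using cls[OF _ lU(1)] u' wsim_iequiv ieq_sym by metis
    have dd: "iequiv Sstar D D'" using cls[OF _ lU(2)] d' wsim_iequiv ieq_sym by metis
    have "iequiv Sstar (U @ D) (U' @ D')" using ieq_app[OF uu dd] .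
    moreover have "iequiv Sstar (D' @ U') (D @ U)" using ieq_app[OF dd uu] ieq_sym by blast
    ultimately show ?thesis using g ieq_trans by blast
  qed
  have same: "iequiv Sstar (F @ G) (G @ F)"
    if "F = c # X1 @ [d]" "G = c # X2 @ [d]" "balanced X1" "balanced X2" "balanced [d, c]"
       "length F + length G = m" for F G c d X1 X2
  proof -
    have m: "m = length X1 + length X2 + 4" using that by simp
    have "iequiv Sstar (X1 @ [d, c]) ([d, c] @ X1)" using sw[of X1 "[d, c]"] that m by simp
    then have e1: "iequiv Sstar (F @ G) ([c, d, c] @ X1 @ X2 @ [d])"
      using ieq_cong[of Sstar "X1 @ [d, c]" "[d, c] @ X1" "[c]" "X2 @ [d]"] that by simp
    have "iequiv Sstar (X2 @ [d, c]) ([d, c] @ X2)" using sw[of X2 "[d, c]"] that m by simp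
    then have e2: "iequiv Sstar (G @ F) ([c, d, c] @ X2 @ X1 @ [d])"
      using ieq_cong[of Sstar "X2 @ [d, c]" "[d, c] @ X2" "[c]" "X1 @ [d]"] that by simp
    have "iequiv Sstar (X1 @ X2) (X2 @ X1)" using sw[of X1 X2] that m by simp
    then have e3: "iequiv Sstar ([c, d, c] @ X1 @ X2 @ [d]) ([c, d, c] @ X2 @ X1 @ [d])"
      using ieq_cong[of Sstar "X1 @ X2" "X2 @ X1" "[c, d, c]" "[d]"] by simp
    show ?thesis using e1 e2 e3 ieq_trans ieq_sym by metis
  qed
  show ?case
  proof (intro allI impI)
    fix F G assume bF: "balanced F" and bG: "balanced G" and m: "length F + length G = m"
    show "iequiv Sstar (F @ G) (G @ F)"
    proof (cases "F = [] \<or> G = []")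
      case True then show ?thesis by (auto simp: ieq_refl)
    next
      case False
      show ?thesis
      proof (cases "is_prime_word F")
        case False
        then obtain A B where ab: "A \<noteq> []" "B \<noteq> []" "balanced A" "balanced B" "F = A @ B"
          using bF \<open>\<not> (F = [] \<or> G = [])\<close> unfolding is_prime_word_def by blast
        have "length B + length G < m" using ab m by (cases A) auto
        then have "iequiv Sstar (B @ G) (G @ B)" using sw[of B G] ab bG by simp
        then have e1: "iequiv Sstar (A @ B @ G) (A @ G @ B)" using ieq_cong[of Sstar "B @ G" "G @ B" A "[]"] by simp
        have "length A + length G < m" using ab m by (cases B) auto
        then have "iequiv Sstar (A @ G) (G @ A)" using sw[of A G] ab bG by simp
        then have e2: "iequiv Sstar (A @ G @ B) (G @ A @ B)" using ieq_cong[of Sstar "A @ G" "G @ A" "[]" B] by simp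
        show ?thesis using e1 e2 ieq_trans ab by simp
      next
        case pF: True
        show ?thesis
        proof (cases "is_prime_word G")
          case False
          then obtain A B where ab: "A \<noteq> []" "B \<noteq> []" "balanced A" "balanced B" "G = A @ B"
            using bG \<open>\<not> (F = [] \<or> G = [])\<close> unfolding is_prime_word_def by blast
          have "length F + length A < m" using ab m by (cases B) auto
        then have "iequiv Sstar (F @ A) (A @ F)" using sw[of F A] ab bF by simp
          then have e1: "iequiv Sstar (F @ A @ B) (A @ F @ B)" using ieq_cong[of Sstar "F @ A" "A @ F" "[]" B] by simp
          have "length F + length B < m" using ab m by (cases A) auto
        then have "iequiv Sstar (F @ B) (B @ F)" using sw[of F B] ab bF by simp
          then have e2: "iequiv Sstar (A @ F @ B) (A @ B @ F)" using ieq_cong[of Sstar "F @ B" "B @ F" A "[]"] by simp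
          show ?thesis using e1 e2 ieq_trans ab by simp
        next
          case pG: True
          consider "upper_prime F" | "lower_prime F" using prime_cases[OF pF] by blast
          then show ?thesis
          proof cases
            case uF: 1
            consider "upper_prime G" | "lower_prime G" using prime_cases[OF pG] by blast
            then show ?thesis
            proof cases
              case 1
              obtain X1 X2 where "F = R # X1 @ [L]" "G = R # X2 @ [L]" "balanced X1" "balanced X2"
                using upper_shape[OF uF] upper_shape[OF 1] by blast
              moreover have "balanced [L, R]" by (simp add: balanced_def)
              ultimately show ?thesis using same m by blast
            next
              case 2
              then show ?thesis using mixed uF m by blast
            qed
          next
            case lF: 2
            consider "upper_prime G" | "lower_prime G" using prime_cases[OF pG] by blast
            then show ?thesis
            proof cases
              case 1
              then show ?thesis using mixed lF m ieq_sym by (metis add.commute)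
            next
              case 2
              obtain X1 X2 where "F = L # X1 @ [R]" "G = L # X2 @ [R]" "balanced X1" "balanced X2"
                using lower_shape[OF lF] lower_shape[OF 2] by blast
              moreover have "balanced [R, L]" by (simp add: balanced_def)
              ultimately show ?thesis using same m by blast
            qed
          qed
        qed
      qed
    qed
  qed
qed

lemma backward:
  assumes sub: "Sstar \<subseteq> S"
    and H: "\<forall>U D. upper_prime U \<longrightarrow> lower_prime D \<longrightarrow>
      (\<exists>U' D'. U' \<sim>\<^sub>J U \<and> D' \<sim>\<^sub>J D \<and>
         (wd (U' @ D') - wd (D' @ U') \<in> Sstar \<or> wd (D' @ U') - wd (U' @ D') \<in> Sstar))"
  shows "ideal_gen Sstar = J"
proof
  show "ideal_gen Sstar \<subseteq> J" unfolding J_def using ideal_mono[OF sub] by blast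
next
  show "J \<subseteq> ideal_gen Sstar"
  proof
    fix x assume "x \<in> J"
    then have "x \<in> ideal_gen S" unfolding J_def .
    then show "x \<in> ideal_gen Sstar"
    proof induction
      case (gen t)
      then obtain F G where t: "t = wd (F @ G) - wd (G @ F)" "balanced F" "balanced G"
        using S_elem by blast
      then have "iequiv Sstar (F @ G) (G @ F)" using backward_main[OF sub H] by blast
      then show ?case using t unfolding iequiv_def by simp
    qed (auto intro: ideal_gen.intros)
  qed
qed

theorem proposition5p7:
  fixes Sstar :: "alg set"
  assumes "Sstar \<subseteq> S"
  shows "ideal_gen Sstar = J \<longleftrightarrow>
    (\<forall>U D. upper_prime U \<longrightarrow> lower_prime D \<longrightarrow>
      (\<exists>U' D'. U' \<sim>\<^sub>J U \<and> D' \<sim>\<^sub>J D \<and>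
         (wd (U' @ D') - wd (D' @ U') \<in> Sstar \<or> wd (D' @ U') - wd (U' @ D') \<in> Sstar)))"
  using forward[OF assms] backward[OF assms] by blast

end
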